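(* Let $\mathcal T$ be a finite tree with $|\mathcal T|$ vertices. Then for all $n\ge1$, \[ h_n(W(\mathcal T))\le n^{2|\mathcal T|}\cdot 4^{|\mathcal T| n}\cdot n^{\gamma(\mathcal T) n}. \]
   Context: $W(\mathcal T)$ is the right-angled Coxeter group of $\mathcal T$: generators $\sigma_v$ for the vertices, relations $\sigma_v^2=1$, and $\sigma_v\sigma_w=\sigma_w\sigma_v$ for adjacent $v,w$. $h_n(\Gamma)=|\mathrm{Hom}(\Gamma,\mathrm{Sym}_n)|$. A clique collection is an induced subgraph whose connected components are complete graphs. For components $\mathcal C_1,\dots,\mathcal C_q$ set $w(\mathcal C)=\sum_i(1-2^{-|\mathcal C_i|})$. Then $\gamma(\mathcal T)$ is the maximum of $w$ over all clique collections of $\mathcal T$. *)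

theory Defs
  imports "HOL-Combinatorics.Permutations" "HOL-Library.FuncSet" Complex_Main
begin

definition simple_graph :: "'a set \<Rightarrow> ('a \<Rightarrow> 'a \<Rightarrow> bool) \<Rightarrow> bool" where
  "simple_graph V E \<longleftrightarrow> finite V \<and> (\<forall>x y. E x y \<longrightarrow> x \<in> V \<and> y \<in> V)
     \<and> (\<forall>x y. E x y \<longrightarrow> E y x) \<and> (\<forall>x. \<not> E x x)"

definition connected_graph :: "'a set \<Rightarrow> ('a \<Rightarrow> 'a \<Rightarrow> bool) \<Rightarrow> bool" where
  "connected_graph V E \<longleftrightarrow> (\<forall>u\<in>V. \<forall>v\<in>V. E\<^sup>*\<^sup>* u v)"

definition is_cycle :: "('a \<Rightarrow> 'a \<Rightarrow> bool) \<Rightarrow> 'a list \<Rightarrow> bool" where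
  "is_cycle E cs \<longleftrightarrow> length cs \<ge> 3 \<and> distinct cs
     \<and> (\<forall>i. Suc i < length cs \<longrightarrow> E (cs ! i) (cs ! Suc i))
     \<and> E (last cs) (hd cs)"

definition is_tree :: "'a set \<Rightarrow> ('a \<Rightarrow> 'a \<Rightarrow> bool) \<Rightarrow> bool" where
  "is_tree V E \<longleftrightarrow> simple_graph V E \<and> V \<noteq> {} \<and> connected_graph V E
     \<and> (\<nexists>cs. is_cycle E cs)"

text \<open>h_n(W(T)) = number of homomorphisms from the right-angled Coxeter group W(T) to Sym_n,
  i.e. the number of families (sigma_v)_{v in V} of permutations of {0..<n} satisfying
  the defining relations sigma_v^2 = 1 and sigma_v sigma_w = sigma_w sigma_v for adjacent v, w.\<close>
definition hom_count_RACG :: "'a set \<Rightarrow> ('a \<Rightarrow> 'a \<Rightarrow> bool) \<Rightarrow> nat \<Rightarrow> nat" where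
  "hom_count_RACG V E n = card {\<sigma> \<in> V \<rightarrow>\<^sub>E {p. p permutes {..<n}}.
       (\<forall>v\<in>V. \<sigma> v \<circ> \<sigma> v = id) \<and>
       (\<forall>v\<in>V. \<forall>w\<in>V. E v w \<longrightarrow> \<sigma> v \<circ> \<sigma> w = \<sigma> w \<circ> \<sigma> v)}"

definition induced_conn :: "('a \<Rightarrow> 'a \<Rightarrow> bool) \<Rightarrow> 'a set \<Rightarrow> 'a \<Rightarrow> 'a \<Rightarrow> bool" where
  "induced_conn E S = (\<lambda>a b. E a b \<and> a \<in> S \<and> b \<in> S)\<^sup>*\<^sup>*"

definition components :: "('a \<Rightarrow> 'a \<Rightarrow> bool) \<Rightarrow> 'a set \<Rightarrow> 'a set set" where
  "components E S = (\<lambda>x. {y \<in> S. induced_conn E S x y}) ` S"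

definition clique_collection :: "'a set \<Rightarrow> ('a \<Rightarrow> 'a \<Rightarrow> bool) \<Rightarrow> 'a set \<Rightarrow> bool" where
  "clique_collection V E S \<longleftrightarrow> S \<subseteq> V \<and>
     (\<forall>C\<in>components E S. \<forall>x\<in>C. \<forall>y\<in>C. x \<noteq> y \<longrightarrow> E x y)"

definition cc_weight :: "('a \<Rightarrow> 'a \<Rightarrow> bool) \<Rightarrow> 'a set \<Rightarrow> real" where
  "cc_weight E S = (\<Sum>C\<in>components E S. 1 - 2 powi (- int (card C)))"

definition gamma_graph :: "'a set \<Rightarrow> ('a \<Rightarrow> 'a \<Rightarrow> bool) \<Rightarrow> real" where
  "gamma_graph V E = Max (cc_weight E ` {S. clique_collection V E S})"

end

theory Submission
  imports Defs
begin

lemma cycle_of_path: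
  assumes "distinct P" "length P \<ge> 3" "successively E P" "E (last P) (hd P)"
  shows "is_cycle E P"
  using assms unfolding is_cycle_def successively_conv_nth by auto

lemma tree_root:
  assumes T: "is_tree V E"
  obtains r par d where "r \<in> V" "d r = (0::nat)"
    "\<And>v. v \<in> V \<Longrightarrow> v \<noteq> r \<Longrightarrow> par v \<in> V \<and> E v (par v) \<and> d v = Suc (d (par v))"
    "\<And>a b. E a b \<Longrightarrow> (a \<noteq> r \<and> par a = b) \<or> (b \<noteq> r \<and> par b = a)"
proof -
  have sg: "simple_graph V E" and ne: "V \<noteq> {}" and con: "connected_graph V E"
    and nocyc: "\<And>cs. \<not> is_cycle E cs"
    using T unfolding is_tree_def by auto
  have EV: "\<And>x y. E x y \<Longrightarrow> x \<in> V \<and> y \<in> V" and Esym: "\<And>x y. E x y \<Longrightarrow> E y x"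
    and Eirr: "\<And>x. \<not> E x x" using sg unfolding simple_graph_def by auto
  obtain r where r: "r \<in> V" using ne by auto
  define d where "d v = (LEAST k. (E^^k) r v)" for v
  define par where "par v = (SOME u. (E^^(d v - 1)) r u \<and> E u v)" for v
  have reach: "(E^^(d v)) r v" if "v \<in> V" for v
  proof -
    have "E\<^sup>*\<^sup>* r v" using con r that unfolding connected_graph_def by auto
    then obtain k where "(E^^k) r v" using rtranclp_imp_relpowp by metis
    then show ?thesis unfolding d_def by (rule LeastI)
  qed
  have dle: "d v \<le> k" if "(E^^k) r v" for v k
    unfolding d_def using that by (rule Least_le)
  have dr: "d r = 0" using dle[of 0 r] by simp
  have dstep: "d b \<le> Suc (d a)" if "E a b" for a b
    using dle[OF relpowp_Suc_I[OF reach that]] EV[OF that] by auto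
  have parp: "par v \<in> V \<and> E v (par v) \<and> d v = Suc (d (par v))" if v: "v \<in> V" "v \<noteq> r" for v
  proof -
    have rv: "(E^^(d v)) r v" using reach v by auto
    have "d v \<noteq> 0" using rv v by (metis relpowp_0_E)
    then obtain j where j: "d v = Suc j" by (cases "d v") auto
    then have "\<exists>u. (E^^(d v - 1)) r u \<and> E u v" using rv by (auto elim: relpowp_Suc_E)
    then have pu: "(E^^j) r (par v) \<and> E (par v) v" unfolding par_def j
      by (metis (mono_tags, lifting) diff_Suc_1 j someI_ex)
    then have "d (par v) \<le> j" using dle by auto
    moreover have "d v \<le> Suc (d (par v))" using dstep pu by auto
    ultimately show ?thesis using pu EV Esym j by auto
  qed
  have dpos: "d v \<noteq> 0" if "v \<in> V" "v \<noteq> r" for v using parp[OF that] by auto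
  have L: "\<forall>x y. x \<in> V \<longrightarrow> y \<in> V \<longrightarrow> x \<noteq> y \<longrightarrow> d x = k \<longrightarrow> d y = k \<longrightarrow>
      (\<exists>P. distinct P \<and> hd P = x \<and> last P = y \<and> length P \<ge> 3 \<and> successively E P
         \<and> (\<forall>z\<in>set P. z \<in> V \<and> d z \<le> k))" for k
  proof (induction k)
    case 0
    have "x = r" if "x \<in> V" "d x = 0" for x using dpos that by blast
    then show ?case by auto
  next
    case (Suc k)
    show ?case
    proof (intro allI impI)
      fix x y assume xy: "x \<in> V" "y \<in> V" "x \<noteq> y" "d x = Suc k" "d y = Suc k"
      have xr: "x \<noteq> r" "y \<noteq> r" using xy dr by auto
      note px = parp[OF xy(1) xr(1)] and py = parp[OF xy(2) xr(2)]
      show "\<exists>P. distinct P \<and> hd P = x \<and> last P = y \<and> length P \<ge> 3 \<and> successively E P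
         \<and> (\<forall>z\<in>set P. z \<in> V \<and> d z \<le> Suc k)"
      proof (cases "par x = par y")
        case True
        show ?thesis
        proof (rule exI[of _ "[x, par x, y]"], intro conjI)
          have n1: "x \<noteq> par x" "y \<noteq> par x" using px py True by (metis n_not_Suc_n)+
          then show "distinct [x, par x, y]" using xy(3) by simp
          show "successively E [x, par x, y]" using px py True Esym[of y "par y"] by simp
          show "\<forall>z\<in>set [x, par x, y]. z \<in> V \<and> d z \<le> Suc k" using px xy by simp
        qed simp_all
      next
        case False
        obtain P where P: "distinct P" "hd P = par x" "last P = par y" "length P \<ge> 3"
          "successively E P" "\<forall>z\<in>set P. z \<in> V \<and> d z \<le> k"
          using Suc.IH[rule_format, of "par x" "par y"] px py xy False by auto
        have Pne: "P \<noteq> []" using P by auto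
        have "x \<notin> set P" "y \<notin> set P" using P(6) xy by fastforce+
        then show ?thesis
          apply (intro exI[of _ "x # P @ [y]"])
          using P Pne px py xy Esym[of y "par y"] by (auto simp: successively_append_iff successively_Cons)
      qed
    qed
  qed
  have key: "(a \<noteq> r \<and> par a = b) \<or> (b \<noteq> r \<and> par b = a)" if ab: "E a b" for a b
  proof (rule ccontr)
    assume nn: "\<not> ?thesis"
    have abV: "a \<in> V" "b \<in> V" "a \<noteq> b" using EV ab Eirr by (auto)
    have ds: "d b \<le> Suc (d a)" "d a \<le> Suc (d b)" using dstep ab Esym by auto
    { fix a b assume ab: "E a b" and abV: "a \<in> V" "b \<in> V" "a \<noteq> b" and db: "d b = Suc (d a)"
        and nb: "\<not> (b \<noteq> r \<and> par b = a)"
      have br: "b \<noteq> r" using db dr by auto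
      note pb = parp[OF abV(2) br]
      have "par b \<noteq> a" using nb br by auto
      then obtain P where P: "distinct P" "hd P = a" "last P = par b" "length P \<ge> 3"
          "successively E P" "\<forall>z\<in>set P. z \<in> V \<and> d z \<le> d a"
        using L[of "d a"] pb abV db by fastforce
      have "b \<notin> set P" using P(6) db by fastforce
      moreover have "P \<noteq> []" using P(4) by auto
      ultimately have "is_cycle E (P @ [b])"
        using P pb ab Esym[of b "par b"] Esym[of a b] by (intro cycle_of_path) (auto simp: successively_append_iff)
      then have False using nocyc by auto }
    note one = this
    consider "d a = d b" | "d b = Suc (d a)" | "d a = Suc (d b)" using ds by linarith
    then show False
    proof cases
      case 1
      obtain P where P: "distinct P" "hd P = a" "last P = b" "length P \<ge> 3"
          "successively E P" "\<forall>z\<in>set P. z \<in> V \<and> d z \<le> d a"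
        using L[of "d a"] abV 1 by fastforce
      then have "is_cycle E P" using ab Esym[OF ab] by (intro cycle_of_path) auto
      then show False using nocyc by auto
    next
      case 2 then show False using one[OF ab abV] nn by auto
    next
      case 3 then show False using one[OF Esym[OF ab]] abV nn by auto
    qed
  qed
  show ?thesis using that[OF r dr parp key] by blast
qed


lemma ic_mono: "induced_conn E S x y \<Longrightarrow> S \<subseteq> T \<Longrightarrow> induced_conn E T x y"
  unfolding induced_conn_def
  by (induction rule: rtranclp_induct) (auto intro: rtranclp.rtrancl_into_rtrancl)

lemma ic_stay:
  assumes "induced_conn E (S \<union> T) x y" "x \<in> S" "\<forall>a\<in>S. \<forall>b\<in>T. \<not> E a b"
  shows "induced_conn E S x y \<and> (y \<in> S)"
  using assms(1) unfolding induced_conn_def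
proof (induction rule: rtranclp_induct)
  case base
  then show ?case using assms(2) by auto
next
  case (step y z)
  then have "z \<in> S" using assms(3) by auto
  then show ?case using step by (auto intro: rtranclp.rtrancl_into_rtrancl)
qed

lemma comp_union_S:
  assumes "x \<in> S" "\<forall>a\<in>S. \<forall>b\<in>T. \<not> E a b"
  shows "{y \<in> S \<union> T. induced_conn E (S \<union> T) x y} = {y \<in> S. induced_conn E S x y}"
  using ic_stay[OF _ assms] ic_mono[of E S x _ "S \<union> T"] by blast

lemma components_union:
  assumes "\<forall>a\<in>S. \<forall>b\<in>T. \<not> E a b \<and> \<not> E b a"
  shows "components E (S \<union> T) = components E S \<union> components E T"
proof -
  have 1: "\<forall>a\<in>S. \<forall>b\<in>T. \<not> E a b" and 2: "\<forall>a\<in>T. \<forall>b\<in>S. \<not> E a b" using assms by auto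
  have "components E (S \<union> T) = (\<lambda>x. {y \<in> S \<union> T. induced_conn E (S \<union> T) x y}) ` S
     \<union> (\<lambda>x. {y \<in> S \<union> T. induced_conn E (S \<union> T) x y}) ` T"
    unfolding components_def by auto
  also have "(\<lambda>x. {y \<in> S \<union> T. induced_conn E (S \<union> T) x y}) ` S = components E S"
    unfolding components_def using comp_union_S[OF _ 1] by (intro image_cong) auto
  also have "(\<lambda>x. {y \<in> S \<union> T. induced_conn E (S \<union> T) x y}) ` T = components E T"
    unfolding components_def using comp_union_S[OF _ 2] by (intro image_cong) (auto simp: Un_commute)
  finally show ?thesis .
qed

lemma components_sub: "C \<in> components E S \<Longrightarrow> C \<subseteq> S \<and> C \<noteq> {}"
  unfolding components_def induced_conn_def by auto

lemma finite_components: "finite S \<Longrightarrow> finite (components E S)"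
  unfolding components_def by auto

lemma cc_weight_union:
  assumes "finite S" "finite T" "S \<inter> T = {}" "\<forall>a\<in>S. \<forall>b\<in>T. \<not> E a b \<and> \<not> E b a"
  shows "cc_weight E (S \<union> T) = cc_weight E S + cc_weight E T"
proof -
  have "components E S \<inter> components E T = {}"
    using components_sub assms(3) by blast
  then show ?thesis unfolding cc_weight_def components_union[OF assms(4)]
    using finite_components assms(1,2) by (intro sum.union_disjoint) auto
qed

lemma cc_union:
  assumes "clique_collection V E S" "clique_collection V E T" "\<forall>a\<in>S. \<forall>b\<in>T. \<not> E a b \<and> \<not> E b a"
  shows "clique_collection V E (S \<union> T)"
  using assms unfolding clique_collection_def components_union[OF assms(3)] by auto

lemma components_indep:
  assumes "\<forall>a\<in>C. \<forall>b\<in>C. \<not> E a b"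
  shows "components E C = (\<lambda>x. {x}) ` C"
proof -
  have "induced_conn E C x y \<longleftrightarrow> x = y" for x y
  proof
    assume "induced_conn E C x y" then show "x = y" unfolding induced_conn_def
      using assms by (induction rule: rtranclp_induct) auto
  qed (auto simp: induced_conn_def)
  then show ?thesis unfolding components_def by auto
qed

lemma cc_weight_indep:
  assumes "finite C" "\<forall>a\<in>C. \<forall>b\<in>C. \<not> E a b"
  shows "cc_weight E C = real (card C) / 2"
  unfolding cc_weight_def components_indep[OF assms(2)]
  by (subst sum.reindex) (auto simp: inj_on_def)

lemma cc_indep:
  assumes "C \<subseteq> V" "\<forall>a\<in>C. \<forall>b\<in>C. \<not> E a b"
  shows "clique_collection V E C"
  unfolding clique_collection_def components_indep[OF assms(2)] using assms(1) by auto

lemma components_edge: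
  assumes "E q u" "E u q" "q \<noteq> u"
  shows "components E {q, u} = {{q, u}}"
proof -
  have "induced_conn E {q,u} q u" "induced_conn E {q,u} u q"
    using assms unfolding induced_conn_def by auto
  then have "induced_conn E {q,u} x y" if "x \<in> {q,u}" "y \<in> {q,u}" for x y
    using that by (auto simp: induced_conn_def)
  then show ?thesis unfolding components_def by auto
qed

lemma cc_weight_edge:
  assumes "E q u" "E u q" "q \<noteq> u"
  shows "cc_weight E {q, u} = 3 / 4"
  unfolding cc_weight_def components_edge[OF assms] using assms(3) by (simp add: power_int_minus)

lemma cc_edge:
  assumes "E q u" "E u q" "q \<noteq> u" "q \<in> V" "u \<in> V"
  shows "clique_collection V E {q, u}"
  unfolding clique_collection_def components_edge[OF assms(1-3)] using assms by auto


lemma cc_empty: "clique_collection V E {}" "cc_weight E {} = 0"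
  unfolding clique_collection_def cc_weight_def components_def by auto

lemma weight_bound:
  fixes V :: "'a set" and E and r :: 'a and par :: "'a \<Rightarrow> 'a" and d :: "'a \<Rightarrow> nat"
  assumes finV: "finite V" and Esym: "\<And>x y. E x y \<Longrightarrow> E y x" and Eirr: "\<And>x. \<not> E x x"
    and EV: "\<And>x y. E x y \<Longrightarrow> x \<in> V \<and> y \<in> V"
    and hpar: "\<And>v. v \<in> V \<Longrightarrow> v \<noteq> r \<Longrightarrow> par v \<in> V \<and> E v (par v) \<and> d v = Suc (d (par v))"
    and hkey: "\<And>a b. E a b \<Longrightarrow> (a \<noteq> r \<and> par a = b) \<or> (b \<noteq> r \<and> par b = a)"
  shows "M \<subseteq> V \<Longrightarrow> \<exists>S\<subseteq>M. clique_collection V E S \<and>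
           real (card M + card {v\<in>M. v = r \<or> par v \<notin> M}) \<le> 4 * cc_weight E S"
proof (induction "card M" arbitrary: M rule: less_induct)
  case less
  define R where "R M = {v\<in>M. v = r \<or> par v \<notin> M}" for M
  have finM: "finite M" using less.prems finV finite_subset by auto
  show ?case
  proof (cases "M = {}")
    case True
    then show ?thesis by (auto simp: cc_empty)
  next
    case False
    have "Max (d ` M) \<in> d ` M" using False finM by (intro Max_in) auto
    then obtain u where u0: "u \<in> M" "d u = Max (d ` M)" by auto
    have u: "u \<in> M" "\<And>w. w \<in> M \<Longrightarrow> d w \<le> d u"
      using u0 finM by auto
    have uV: "u \<in> V" using u less.prems by auto
    have finR: "finite (R X)" if "X \<subseteq> M" for X unfolding R_def using that by (intro finite_subset[OF _ finM]) auto
    show ?thesis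
    proof (cases "u = r \<or> par u \<notin> M")
      case True
      have nbr: "\<not> E u w \<and> \<not> E w u" if w: "w \<in> M" for w
      proof -
        have "\<not> E u w"
        proof
          assume e: "E u w"
          show False using hkey[OF e]
          proof
            assume "u \<noteq> r \<and> par u = w" then show False using True w by auto
          next
            assume "w \<noteq> r \<and> par w = u"
            then have "d w = Suc (d u)" using hpar[of w] w less.prems by auto
            then show False using u(2)[OF w] by auto
          qed
        qed
        then show ?thesis using Esym by auto
      qed
      define M' where "M' = M - {u}"
      have cM: "card M' < card M" "card M = Suc (card M')" unfolding M'_def using u finM card_gt_0_iff[of M]
        by (auto simp: card_Diff_singleton)
      have RM': "R M' = R M - {u}"
      proof -
        have "par v \<noteq> u" if "v \<in> M" "v \<noteq> r" for v
          using nbr[OF that(1)] hpar[of v] that less.prems by auto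
        then show ?thesis unfolding R_def M'_def by auto
      qed
      have uR: "u \<in> R M" using True u unfolding R_def by auto
      have cR: "card (R M) = Suc (card (R M'))" unfolding RM' using uR finR[of M] card_gt_0_iff[of "R M"]
        by (auto simp: card_Diff_singleton)
      obtain S' where S': "S' \<subseteq> M'" "clique_collection V E S'"
        "real (card M' + card (R M')) \<le> 4 * cc_weight E S'"
        using less.hyps[OF cM(1)] less.prems unfolding M'_def R_def by auto
      have sep: "\<forall>a\<in>S'. \<forall>b\<in>{u}. \<not> E a b \<and> \<not> E b a" using nbr S'(1) unfolding M'_def by auto
      have "clique_collection V E (S' \<union> {u})"
        using cc_union[OF S'(2) cc_indep[of "{u}" V E] sep] uV Eirr by auto
      moreover have wt: "cc_weight E (S' \<union> {u}) = cc_weight E S' + 1/2"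
        using cc_weight_union[OF _ _ _ sep] cc_weight_indep[of "{u}" E] S'(1) finM Eirr
        unfolding M'_def by (auto intro: finite_subset)
      moreover have "real (card M + card (R M)) \<le> 4 * cc_weight E (S' \<union> {u})"
        using S'(3) cM(2) cR wt by simp
      moreover have "S' \<union> {u} \<subseteq> M" using S'(1) u unfolding M'_def by auto
      ultimately show ?thesis unfolding R_def[symmetric] by blast
    next
      case False
      define q where "q = par u"
      have ur: "u \<noteq> r" and qM: "q \<in> M" using False unfolding q_def by auto
      note pu = hpar[OF uV ur]
      have qV: "q \<in> V" using pu q_def by auto
      define C where "C = {c\<in>M. c \<noteq> r \<and> par c = q}"
      have uC: "u \<in> C" unfolding C_def q_def using u ur by auto
      have dC: "d c = d u" if "c \<in> C" for c
        using that hpar[of c] pu less.prems unfolding C_def q_def by auto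
      have qC: "q \<notin> C"
      proof
        assume "q \<in> C" then have "d q = d u" by (rule dC)
        then show False using pu unfolding q_def by simp
      qed
      have CM: "C \<subseteq> M" unfolding C_def by auto
      have nbrC: "w = q" if "c \<in> C" "w \<in> M" "E c w" for c w
        using hkey[OF that(3)]
      proof
        assume "c \<noteq> r \<and> par c = w" then show ?thesis using that unfolding C_def by auto
      next
        assume "w \<noteq> r \<and> par w = c"
        then have "d w = Suc (d u)" using hpar[of w] that less.prems dC by auto
        then show ?thesis using u(2)[OF that(2)] by auto
      qed
      have indC: "\<forall>a\<in>C. \<forall>b\<in>C. \<not> E a b" using nbrC qC CM by blast
      define M' where "M' = M - insert q C"
      have finC: "finite C" using CM finM finite_subset by auto
      have qCM: "insert q C \<subseteq> M" using qM CM by auto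
      have c1: "card (insert q C) = Suc (card C)" using qC finC by simp
      have c2: "card (insert q C) \<le> card M" using qCM finM by (rule card_mono[rotated])
      have c3: "card M' = card M - card (insert q C)" unfolding M'_def
        using qCM finM by (intro card_Diff_subset) (auto intro: finite_subset)
      have cM: "card M' < card M" "card M = card M' + 1 + card C"
        using c1 c2 c3 by auto
      have RM': "R M' = R M - insert q C"
      proof -
        have "par v \<notin> insert q C" if "v \<in> M" "v \<noteq> r" "v \<notin> C" for v
        proof
          assume pv: "par v \<in> insert q C"
          show False
          proof (cases "par v = q")
            case True then show False using that unfolding C_def by auto
          next
            case False
            then have "par v \<in> C" using pv by auto
            then have "d v = Suc (d u)" using hpar[of v] that less.prems dC by auto
            then show False using u(2)[OF that(1)] by auto
          qed
        qed
        then show ?thesis unfolding R_def M'_def by auto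
      qed
      define qr where "qr = (if q \<in> R M then 1 else 0::nat)"
      have cR: "card (R M) \<le> card (R M') + qr"
      proof -
        have "R M \<subseteq> R M' \<union> (R M \<inter> {q})"
          unfolding RM' using qM qC by (auto simp: R_def C_def)
        then have "card (R M) \<le> card (R M' \<union> (R M \<inter> {q}))"
          using finR[of M] finR[of M'] unfolding M'_def by (intro card_mono) auto
        also have "\<dots> \<le> card (R M') + card (R M \<inter> {q})" by (rule card_Un_le)
        also have "card (R M \<inter> {q}) = qr" unfolding qr_def by auto
        finally show ?thesis .
      qed
      obtain S' where S': "S' \<subseteq> M'" "clique_collection V E S'"
        "real (card M' + card (R M')) \<le> 4 * cc_weight E S'"
        using less.hyps[OF cM(1)] less.prems unfolding M'_def R_def by auto
      have finS': "finite S'" using S'(1) finM unfolding M'_def by (auto intro: finite_subset)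
      have S'M: "S' \<subseteq> M" "q \<notin> S'" "S' \<inter> C = {}" using S'(1) unfolding M'_def by auto
      have card1: "card C \<ge> 1" using uC finC by (metis card_0_eq empty_iff less_one not_le)
      show ?thesis
      proof (cases "qr = 0 \<or> card C \<ge> 2")
        case True
        have sep: "\<forall>a\<in>S'. \<forall>b\<in>C. \<not> E a b \<and> \<not> E b a"
          using nbrC S'M Esym by blast
        have "clique_collection V E (S' \<union> C)"
          using cc_union[OF S'(2) cc_indep[OF _ indC] sep] CM less.prems by auto
        moreover have wt: "cc_weight E (S' \<union> C) = cc_weight E S' + card C / 2"
          using cc_weight_union[OF finS' finC S'M(3) sep] cc_weight_indep[OF finC indC] by auto
        moreover have "1 + qr \<le> card C" using True card1 unfolding qr_def by auto
        then have "real (card M + card (R M)) \<le> 4 * cc_weight E (S' \<union> C)"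
          using S'(3) cM(2) cR wt by simp
        moreover have "S' \<union> C \<subseteq> M" using S'M CM by auto
        ultimately show ?thesis unfolding R_def[symmetric] by blast
      next
        case False
        then have qr1: "qr \<noteq> 0" and cC: "card C = 1" using card1 by auto
        then have qR: "q \<in> R M" unfolding qr_def by (auto split: if_splits)
        obtain x where "C = {x}" using cC card_1_singletonE by blast
        then have C1: "C = {u}" using uC by auto
        have qr1': "qr = 1" using qr1 unfolding qr_def by (auto split: if_splits)
        have qnb: "\<not> E q w" if "w \<in> S'" for w
        proof
          assume e: "E q w"
          have wM: "w \<in> M" using that S'M by auto
          show False using hkey[OF e]
          proof
            assume "q \<noteq> r \<and> par q = w" then show False using qR wM unfolding R_def by auto
          next
            assume "w \<noteq> r \<and> par w = q"
            then have "w \<in> C" using wM unfolding C_def by auto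
            then show False using S'M that by auto
          qed
        qed
        have unb: "\<not> E u w" if "w \<in> S'" for w using nbrC[OF uC, of w] that S'M by auto
        have sep: "\<forall>a\<in>S'. \<forall>b\<in>{q,u}. \<not> E a b \<and> \<not> E b a"
          using qnb unb Esym by blast
        have equ: "E q u" "E u q" "q \<noteq> u" using pu Esym qC uC unfolding q_def by auto
        have "clique_collection V E (S' \<union> {q,u})"
          using cc_union[OF S'(2) cc_edge[OF equ qV uV] sep] by auto
        moreover have wt: "cc_weight E (S' \<union> {q,u}) = cc_weight E S' + 3/4"
          using cc_weight_union[OF finS' _ _ sep] cc_weight_edge[OF equ] S'M uC by auto
        moreover have "real (card M + card (R M)) \<le> 4 * cc_weight E (S' \<union> {q,u})"
          using S'(3) cM(2) cR wt C1 qr1' by simp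
        moreover have "S' \<union> {q,u} \<subseteq> M" using S'M qM u by auto
        ultimately show ?thesis unfolding R_def[symmetric] by blast
      qed
    qed
  qed
qed


definition orb :: "(nat \<Rightarrow> nat) \<Rightarrow> (nat \<Rightarrow> nat) \<Rightarrow> nat \<Rightarrow> nat set" where
  "orb \<alpha> \<beta> i = {i, \<alpha> i, \<beta> i, \<alpha> (\<beta> i)}"

definition cd :: "nat \<Rightarrow> (nat \<Rightarrow> nat) \<Rightarrow> (nat \<Rightarrow> nat) \<Rightarrow> nat \<Rightarrow> nat" where
  "cd n \<alpha> \<beta> i = (if \<exists>k\<in>orb \<alpha> \<beta> i. k < i then n else if \<beta> i = i then n + 1
      else if \<beta> i = \<alpha> i then n + 2 else \<beta> i)"

definition wgt :: "(nat \<Rightarrow> nat) \<Rightarrow> (nat \<Rightarrow> nat) \<Rightarrow> nat \<Rightarrow> nat" where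
  "wgt \<alpha> \<beta> i = (if \<beta> i \<noteq> i then 1 else 0) + (if \<beta> i \<noteq> i \<and> \<alpha> i = i then 1 else 0)"

definition invol_pair :: "nat \<Rightarrow> (nat \<Rightarrow> nat) \<Rightarrow> (nat \<Rightarrow> nat) \<Rightarrow> bool" where
  "invol_pair n \<alpha> \<beta> \<longleftrightarrow> (\<forall>x. \<alpha> (\<alpha> x) = x) \<and> (\<forall>x. \<beta> (\<beta> x) = x) \<and> (\<forall>x. \<alpha> (\<beta> x) = \<beta> (\<alpha> x))
     \<and> (\<forall>x<n. \<alpha> x < n \<and> \<beta> x < n)"

lemma orb_eq:
  assumes "invol_pair n \<alpha> \<beta>" "x \<in> orb \<alpha> \<beta> p"
  shows "orb \<alpha> \<beta> x = orb \<alpha> \<beta> p"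
  using assms unfolding invol_pair_def orb_def by auto

lemma orb_self: "p \<in> orb \<alpha> \<beta> p" unfolding orb_def by auto

lemma cd_lt:
  assumes "invol_pair n \<alpha> \<beta>" "i < n"
  shows "cd n \<alpha> \<beta> i < n \<longleftrightarrow> (\<forall>k\<in>orb \<alpha> \<beta> i. \<not> k < i) \<and> \<beta> i \<noteq> i \<and> \<beta> i \<noteq> \<alpha> i"
  using assms unfolding cd_def invol_pair_def by auto

lemma cd_range:
  assumes "invol_pair n \<alpha> \<beta>" "i < n"
  shows "cd n \<alpha> \<beta> i < n + 3"
  using assms unfolding cd_def invol_pair_def by auto

lemma orb_sub:
  assumes "invol_pair n \<alpha> \<beta>" "i < n"
  shows "orb \<alpha> \<beta> i \<subseteq> {..<n}"
  using assms unfolding orb_def invol_pair_def by auto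

lemma orb_sum:
  assumes ip: "invol_pair n \<alpha> \<beta>" and b1: "\<beta> p \<noteq> p" and b2: "\<beta> p \<noteq> \<alpha> p"
  shows "(\<Sum>x\<in>orb \<alpha> \<beta> p. wgt \<alpha> \<beta> x) = 4"
proof -
  have aa: "\<And>x. \<alpha> (\<alpha> x) = x" and bb: "\<And>x. \<beta> (\<beta> x) = x" and ab: "\<And>x. \<alpha> (\<beta> x) = \<beta> (\<alpha> x)"
    using ip unfolding invol_pair_def by auto
  show ?thesis
  proof (cases "\<alpha> p = p")
    case True
    have o: "orb \<alpha> \<beta> p = {p, \<beta> p}" unfolding orb_def using True ab by auto
    have "wgt \<alpha> \<beta> p = 2" using True b1 unfolding wgt_def by auto
    moreover have "wgt \<alpha> \<beta> (\<beta> p) = 2" using True b1 bb[of p] ab[of p] unfolding wgt_def by auto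
    ultimately show ?thesis unfolding o using b1 by simp
  next
    case False
    have d1: "\<alpha> (\<beta> p) \<noteq> p" using b2 aa[of p] by (metis aa)
    have d2: "\<alpha> (\<beta> p) \<noteq> \<alpha> p" using b1 by (metis aa)
    have d3: "\<alpha> (\<beta> p) \<noteq> \<beta> p" using False by (metis ab bb)
    have w: "wgt \<alpha> \<beta> x = 1" if "x \<in> {p, \<alpha> p, \<beta> p, \<alpha> (\<beta> p)}" for x
    proof -
      have "\<beta> x \<noteq> x \<and> \<alpha> x \<noteq> x" using that
      proof (elim insertE emptyE)
        assume "x = p" then show ?thesis using b1 False by auto
      next
        assume "x = \<alpha> p" then show ?thesis using d2 ab[of p] aa[of p] False by metis
      next
        assume "x = \<beta> p" then show ?thesis using d3 bb[of p] b1 by metis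
      next
        assume "x = \<alpha> (\<beta> p)" then show ?thesis using d2 d3 ab bb aa by metis
      qed
      then show ?thesis unfolding wgt_def by auto
    qed
    have "(\<Sum>x\<in>orb \<alpha> \<beta> p. wgt \<alpha> \<beta> x) = (\<Sum>x\<in>orb \<alpha> \<beta> p. 1)"
      using w unfolding orb_def by (intro sum.cong) auto
    also have "\<dots> = card {p, \<alpha> p, \<beta> p, \<alpha> (\<beta> p)}" unfolding orb_def by simp
    also have "\<dots> = 4" using False b1 b2 d1 d2 d3 by (simp add: eq_commute)
    finally show ?thesis .
  qed
qed

lemma pay_count:
  assumes ip: "invol_pair n \<alpha> \<beta>"
  shows "4 * card {i\<in>{..<n}. cd n \<alpha> \<beta> i < n} \<le> (\<Sum>i<n. wgt \<alpha> \<beta> i)"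
proof -
  define P where "P = {i\<in>{..<n}. cd n \<alpha> \<beta> i < n}"
  have Pc: "(\<forall>k\<in>orb \<alpha> \<beta> p. \<not> k < p) \<and> \<beta> p \<noteq> p \<and> \<beta> p \<noteq> \<alpha> p" "p < n" if "p \<in> P" for p
    using that cd_lt[OF ip] unfolding P_def by auto
  have disj: "orb \<alpha> \<beta> p \<inter> orb \<alpha> \<beta> q = {}" if "p \<in> P" "q \<in> P" "p \<noteq> q" for p q
  proof (rule ccontr)
    assume "orb \<alpha> \<beta> p \<inter> orb \<alpha> \<beta> q \<noteq> {}"
    then obtain x where x: "x \<in> orb \<alpha> \<beta> p" "x \<in> orb \<alpha> \<beta> q" by auto
    have "orb \<alpha> \<beta> p = orb \<alpha> \<beta> q" using orb_eq[OF ip x(1)] orb_eq[OF ip x(2)] by simp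
    then have "q \<in> orb \<alpha> \<beta> p" "p \<in> orb \<alpha> \<beta> q" using orb_self by metis+
    then have "\<not> q < p" "\<not> p < q" using Pc[OF that(1)] Pc[OF that(2)] by blast+
    then show False using that(3) by simp
  qed
  have finP: "finite P" unfolding P_def by auto
  have "4 * card P = (\<Sum>p\<in>P. 4)" by simp
  also have "\<dots> = (\<Sum>p\<in>P. \<Sum>x\<in>orb \<alpha> \<beta> p. wgt \<alpha> \<beta> x)"
    using orb_sum[OF ip] Pc by (intro sum.cong) auto
  also have "\<dots> = (\<Sum>x\<in>(\<Union>p\<in>P. orb \<alpha> \<beta> p). wgt \<alpha> \<beta> x)"
    using finP disj by (intro sum.UNION_disjoint[symmetric]) (auto simp: orb_def)
  also have "\<dots> \<le> (\<Sum>i<n. wgt \<alpha> \<beta> i)"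
    using orb_sub[OF ip] Pc by (intro sum_mono2) auto
  finally show ?thesis unfolding P_def .
qed

lemma cd_inj:
  assumes ip1: "invol_pair n \<alpha> \<beta>1" and ip2: "invol_pair n \<alpha> \<beta>2"
    and eq: "\<And>i. i < n \<Longrightarrow> cd n \<alpha> \<beta>1 i = cd n \<alpha> \<beta>2 i"
  shows "i < n \<Longrightarrow> \<beta>1 i = \<beta>2 i"
proof (induction i rule: less_induct)
  case (less i)
  have aa: "\<And>x. \<alpha> (\<alpha> x) = x" and bb1: "\<And>x. \<beta>1 (\<beta>1 x) = x" and ab1: "\<And>x. \<alpha> (\<beta>1 x) = \<beta>1 (\<alpha> x)"
    and bb2: "\<And>x. \<beta>2 (\<beta>2 x) = x" and ab2: "\<And>x. \<alpha> (\<beta>2 x) = \<beta>2 (\<alpha> x)"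
    and r1: "\<And>x. x < n \<Longrightarrow> \<beta>1 x < n" and ra: "\<And>x. x < n \<Longrightarrow> \<alpha> x < n"
    using ip1 ip2 unfolding invol_pair_def by auto
  have IH: "\<beta>1 k = \<beta>2 k" if "k < i" for k using less that by auto
  have e: "cd n \<alpha> \<beta>1 i = cd n \<alpha> \<beta>2 i" using eq less.prems by auto
  show ?case
  proof (cases "\<exists>k\<in>orb \<alpha> \<beta>1 i. k < i")
    case True
    then obtain k where k: "k \<in> orb \<alpha> \<beta>1 i" "k < i" by auto
    then consider "k = \<alpha> i" | "k = \<beta>1 i" | "k = \<alpha> (\<beta>1 i)" unfolding orb_def by auto
    then show ?thesis
    proof cases
      case 1
      then have "\<beta>1 i = \<beta>1 (\<alpha> k)" using aa by auto
      also have "\<dots> = \<alpha> (\<beta>1 k)" using ab1 by auto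
      also have "\<dots> = \<alpha> (\<beta>2 k)" using IH k by auto
      also have "\<dots> = \<beta>2 i" using ab2 aa 1 by auto
      finally show ?thesis .
    next
      case 2
      then have "\<beta>2 k = i" using IH[OF k(2)] bb1 by metis
      then show ?thesis using 2 bb2 by metis
    next
      case 3
      then have "\<beta>1 k = \<alpha> i" using ab1 bb1 by metis
      then have "\<beta>2 k = \<alpha> i" using IH[OF k(2)] by auto
      then have "k = \<beta>2 (\<alpha> i)" using bb2 by metis
      then have "\<beta>2 i = \<alpha> k" using ab2 aa by metis
      then show ?thesis using 3 aa by metis
    qed
  next
    case False
    then have c1: "cd n \<alpha> \<beta>1 i = (if \<beta>1 i = i then n + 1 else if \<beta>1 i = \<alpha> i then n + 2 else \<beta>1 i)"
      unfolding cd_def by auto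
    have lt: "\<beta>1 i < n" "\<beta>2 i < n" using r1 less.prems ip2 unfolding invol_pair_def by auto
    have c2: "(cd n \<alpha> \<beta>2 i = n + 1 \<longrightarrow> \<beta>2 i = i) \<and> (cd n \<alpha> \<beta>2 i = n + 2 \<longrightarrow> \<beta>2 i = \<alpha> i)
       \<and> (cd n \<alpha> \<beta>2 i < n \<longrightarrow> cd n \<alpha> \<beta>2 i = \<beta>2 i)" using lt(2) unfolding cd_def by auto
    show ?thesis using e c1 c2 lt by (auto split: if_splits)
  qed
qed


lemma gamma_ge:
  assumes "finite V" "clique_collection V E S"
  shows "cc_weight E S \<le> gamma_graph V E"
proof -
  have "{S. clique_collection V E S} \<subseteq> Pow V" unfolding clique_collection_def by auto
  then have "finite {S. clique_collection V E S}" using assms(1) finite_subset by blast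
  then show ?thesis unfolding gamma_graph_def using assms(2) by (intro Max_ge) auto
qed

lemma sum_indicator: "finite A \<Longrightarrow> (\<Sum>x\<in>A. if P x then 1 else 0::nat) = card {x\<in>A. P x}"
  by (simp add: sum.If_cases Int_def)

lemma prod_indicator: "finite A \<Longrightarrow> (\<Prod>x\<in>A. if P x then c else 1::real) = c ^ card {x\<in>A. P x}"
  by (simp add: prod.If_cases Int_def)

theorem mainTheorem8:
  fixes V :: "'a set" and E :: "'a \<Rightarrow> 'a \<Rightarrow> bool" and n :: nat
  assumes "is_tree V E" and "n \<ge> 1"
  shows "real (hom_count_RACG V E n)
           \<le> real n ^ (2 * card V) * 4 ^ (card V * n) * real n powr (gamma_graph V E * real n)"
proof -
  define H where "H = {\<sigma> \<in> V \<rightarrow>\<^sub>E {p. p permutes {..<n}}.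
       (\<forall>v\<in>V. \<sigma> v \<circ> \<sigma> v = id) \<and>
       (\<forall>v\<in>V. \<forall>w\<in>V. E v w \<longrightarrow> \<sigma> v \<circ> \<sigma> w = \<sigma> w \<circ> \<sigma> v)}"
  have hc: "hom_count_RACG V E n = card H" unfolding hom_count_RACG_def H_def by simp
  have sg: "simple_graph V E" using assms(1) unfolding is_tree_def by auto
  have finV: "finite V" and EV: "\<And>x y. E x y \<Longrightarrow> x \<in> V \<and> y \<in> V" and Esym: "\<And>x y. E x y \<Longrightarrow> E y x"
    and Eirr: "\<And>x. \<not> E x x" using sg unfolding simple_graph_def by auto
  obtain r and d :: "'a \<Rightarrow> nat" and par where r: "r \<in> V" "d r = 0"
    and hpar: "\<And>v. v \<in> V \<Longrightarrow> v \<noteq> r \<Longrightarrow> par v \<in> V \<and> E v (par v) \<and> d v = Suc (d (par v))"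
    and hkey: "\<And>a b. E a b \<Longrightarrow> (a \<noteq> r \<and> par a = b) \<or> (b \<noteq> r \<and> par b = a)"
    by (rule tree_root[OF assms(1)], rule that, assumption+)
  define \<rho> where "\<rho> \<sigma> v = (if v = r then id else \<sigma> (par v))" for \<sigma> :: "'a \<Rightarrow> nat \<Rightarrow> nat" and v
  define D where "D = V \<times> {..<n}"
  define code where "code \<sigma> = (\<lambda>x\<in>D. cd n (\<rho> \<sigma> (fst x)) (\<sigma> (fst x)) (snd x))" for \<sigma>
  define \<gamma> where "\<gamma> = gamma_graph V E"
  have finD: "finite D" unfolding D_def using finV by auto
  have npos: "real n > 0" using assms(2) by auto

  have perm: "\<sigma> v permutes {..<n}" if "\<sigma> \<in> H" "v \<in> V" for \<sigma> v
    using that unfolding H_def by auto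
  have ip: "invol_pair n (\<rho> \<sigma> v) (\<sigma> v)" if s: "\<sigma> \<in> H" and v: "v \<in> V" for \<sigma> v
  proof -
    have inv: "\<sigma> w (\<sigma> w x) = x" if "w \<in> V" for w x
      using s that unfolding H_def by (metis (mono_tags, lifting) comp_apply id_apply mem_Collect_eq)
    have rng: "\<sigma> w x < n" if "w \<in> V" "x < n" for w x
      using permutes_in_image[OF perm[OF s that(1)]] that by auto
    show ?thesis
    proof (cases "v = r")
      case True
      then show ?thesis unfolding invol_pair_def \<rho>_def using inv[OF v] rng[OF v] by auto
    next
      case False
      note pv = hpar[OF v False]
      have "\<sigma> v \<circ> \<sigma> (par v) = \<sigma> (par v) \<circ> \<sigma> v" using s pv v unfolding H_def by auto
      then have "\<sigma> (par v) (\<sigma> v x) = \<sigma> v (\<sigma> (par v) x)" for x by (metis comp_apply)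
      then show ?thesis unfolding invol_pair_def \<rho>_def using False inv[OF v] rng[OF v]
          inv[of "par v"] rng[of "par v"] pv by auto
    qed
  qed

  have code_in: "code \<sigma> \<in> D \<rightarrow>\<^sub>E {..<n+3}" if "\<sigma> \<in> H" for \<sigma>
    unfolding code_def D_def using cd_range[OF ip[OF that]] by auto

  have inj: "inj_on code H"
  proof (rule inj_onI)
    fix \<sigma> \<tau> assume s: "\<sigma> \<in> H" and t: "\<tau> \<in> H" and eq: "code \<sigma> = code \<tau>"
    have vv: "v \<in> V \<Longrightarrow> \<sigma> v = \<tau> v" for v
    proof (induction "d v" arbitrary: v rule: less_induct)
      case less
      have req: "\<rho> \<sigma> v = \<rho> \<tau> v"
      proof (cases "v = r")
        case True then show ?thesis unfolding \<rho>_def by auto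
      next
        case False
        note pv = hpar[OF less.prems False]
        then have "\<sigma> (par v) = \<tau> (par v)" using less.hyps[of "par v"] by auto
        then show ?thesis unfolding \<rho>_def by auto
      qed
      have ip1: "invol_pair n (\<rho> \<sigma> v) (\<sigma> v)" using ip[OF s less.prems] .
      have ip2: "invol_pair n (\<rho> \<sigma> v) (\<tau> v)" using ip[OF t less.prems] req by simp
      have ceq: "cd n (\<rho> \<sigma> v) (\<sigma> v) i = cd n (\<rho> \<sigma> v) (\<tau> v) i" if "i < n" for i
      proof -
        have "code \<sigma> (v, i) = code \<tau> (v, i)" using eq by simp
        then show ?thesis using that less.prems req unfolding code_def D_def by auto
      qed
      have "\<sigma> v i = \<tau> v i" for i
      proof (cases "i < n")
        case True then show ?thesis using cd_inj[OF ip1 ip2 ceq] by auto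
      next
        case False then show ?thesis
          using permutes_not_in[OF perm[OF s less.prems]] permutes_not_in[OF perm[OF t less.prems]]
          by auto
      qed
      then show ?case by auto
    qed
    show "\<sigma> = \<tau>" using s t vv unfolding H_def by (intro PiE_ext[of \<sigma> V "\<lambda>_. {p. p permutes {..<n}}"]) auto
  qed

  have pays: "real (card {x\<in>D. code \<sigma> x < n}) \<le> \<gamma> * real n" if s: "\<sigma> \<in> H" for \<sigma>
  proof -
    define M where "M i = {v\<in>V. \<sigma> v i \<noteq> i}" for i
    have "{x\<in>D. code \<sigma> x < n} = Sigma V (\<lambda>v. {i\<in>{..<n}. cd n (\<rho> \<sigma> v) (\<sigma> v) i < n})"
      unfolding D_def code_def by auto
    then have c1: "card {x\<in>D. code \<sigma> x < n} = (\<Sum>v\<in>V. card {i\<in>{..<n}. cd n (\<rho> \<sigma> v) (\<sigma> v) i < n})"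
      using finV by simp
    have "4 * card {x\<in>D. code \<sigma> x < n} \<le> (\<Sum>v\<in>V. \<Sum>i<n. wgt (\<rho> \<sigma> v) (\<sigma> v) i)"
      unfolding c1 sum_distrib_left using pay_count[OF ip[OF s]] by (intro sum_mono) auto
    also have "\<dots> = (\<Sum>i<n. \<Sum>v\<in>V. wgt (\<rho> \<sigma> v) (\<sigma> v) i)" by (rule sum.swap)
    also have "\<dots> = (\<Sum>i<n. card (M i) + card {v\<in>M i. v = r \<or> par v \<notin> M i})"
    proof (intro sum.cong refl)
      fix i
      have a: "(\<Sum>v\<in>V. if \<sigma> v i \<noteq> i then 1 else 0) = card (M i)"
        unfolding M_def using finV by (rule sum_indicator)
      have "(\<Sum>v\<in>V. if \<sigma> v i \<noteq> i \<and> \<rho> \<sigma> v i = i then 1 else 0)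
          = (\<Sum>v\<in>V. if v \<in> M i \<and> (v = r \<or> par v \<notin> M i) then 1 else 0)"
        using hpar unfolding M_def \<rho>_def by (intro sum.cong refl) auto
      also have "\<dots> = card {v\<in>V. v \<in> M i \<and> (v = r \<or> par v \<notin> M i)}" using finV by (rule sum_indicator)
      also have "{v\<in>V. v \<in> M i \<and> (v = r \<or> par v \<notin> M i)} = {v\<in>M i. v = r \<or> par v \<notin> M i}"
        unfolding M_def by auto
      finally show "(\<Sum>v\<in>V. wgt (\<rho> \<sigma> v) (\<sigma> v) i) = card (M i) + card {v\<in>M i. v = r \<or> par v \<notin> M i}"
        unfolding wgt_def sum.distrib a by simp
    qed
    finally have A0: "4 * card {x\<in>D. code \<sigma> x < n}
        \<le> (\<Sum>i<n. card (M i) + card {v\<in>M i. v = r \<or> par v \<notin> M i})" .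
    have A: "real (4 * card {x\<in>D. code \<sigma> x < n})
        \<le> (\<Sum>i<n. real (card (M i) + card {v\<in>M i. v = r \<or> par v \<notin> M i}))"
      by (subst of_nat_sum[symmetric], subst of_nat_le_iff, rule A0)
    have B: "real (card (M i) + card {v\<in>M i. v = r \<or> par v \<notin> M i}) \<le> 4 * \<gamma>" for i
    proof -
      obtain S where S: "S \<subseteq> M i" "clique_collection V E S"
        "real (card (M i) + card {v\<in>M i. v = r \<or> par v \<notin> M i}) \<le> 4 * cc_weight E S"
        using weight_bound[OF finV Esym Eirr EV hpar hkey, of "M i"] unfolding M_def by auto
      then show ?thesis using gamma_ge[OF finV S(2)] unfolding \<gamma>_def by linarith
    qed
    have "(\<Sum>i<n. real (card (M i) + card {v\<in>M i. v = r \<or> par v \<notin> M i})) \<le> (\<Sum>i<n. 4 * \<gamma>)"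
      using B by (intro sum_mono) auto
    then have "real (4 * card {x\<in>D. code \<sigma> x < n}) \<le> real n * (4 * \<gamma>)" using A by simp
    then show ?thesis by (simp add: algebra_simps)
  qed

  define w where "w c = (if c < n then 1 / real n else 1)" for c
  have lowb: "real n powr (- (\<gamma> * real n)) \<le> (\<Prod>x\<in>D. w (code \<sigma> x))" if s: "\<sigma> \<in> H" for \<sigma>
  proof -
    have "(\<Prod>x\<in>D. w (code \<sigma> x)) = (1 / real n) ^ card {x\<in>D. code \<sigma> x < n}"
      unfolding w_def using finD by (rule prod_indicator)
    also have "\<dots> = real n powr (- real (card {x\<in>D. code \<sigma> x < n}))"
      using npos by (simp add: powr_minus powr_realpow power_one_over inverse_eq_divide)
    finally show ?thesis using pays[OF s] assms(2) by (auto intro: powr_mono)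
  qed
  have sum4: "(\<Sum>c<n+3. w c) = 4"
  proof -
    have "(\<Sum>c<n+3. w c) = (\<Sum>c<n. w c) + w n + w (n+1) + w (n+2)"
      by (simp add: numeral_3_eq_3)
    also have "(\<Sum>c<n. w c) = 1" unfolding w_def using npos by simp
    finally show ?thesis unfolding w_def by simp
  qed
  have "real (card H) * real n powr (- (\<gamma> * real n)) = (\<Sum>\<sigma>\<in>H. real n powr (- (\<gamma> * real n)))"
    by simp
  also have "\<dots> \<le> (\<Sum>\<sigma>\<in>H. \<Prod>x\<in>D. w (code \<sigma> x))"
    using lowb by (intro sum_mono) auto
  also have "\<dots> = (\<Sum>f\<in>code ` H. \<Prod>x\<in>D. w (f x))"
    using inj by (simp add: sum.reindex)
  also have "\<dots> \<le> (\<Sum>f\<in>D \<rightarrow>\<^sub>E {..<n+3}. \<Prod>x\<in>D. w (f x))"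
    using code_in finD by (intro sum_mono2) (auto simp: w_def finite_PiE intro: prod_nonneg)
  also have "\<dots> = (\<Prod>x\<in>D. \<Sum>c\<in>{..<n+3}. w c)"
    using prod_sum_PiE[of D "\<lambda>_. {..<n+3}" "\<lambda>_ c. w c"] finD by simp
  also have "\<dots> = 4 ^ card D" using sum4 by simp
  finally have main: "real (card H) * real n powr (- (\<gamma> * real n)) \<le> 4 ^ card D" .
  have "real (card H) = real (card H) * real n powr (- (\<gamma> * real n)) * real n powr (\<gamma> * real n)"
    using npos by (simp add: powr_minus field_simps)
  also have "\<dots> \<le> 4 ^ card D * real n powr (\<gamma> * real n)"
    using main by (intro mult_right_mono) auto
  also have "card D = card V * n" unfolding D_def by (simp add: card_cartesian_product)
  also have "(4::real) ^ (card V * n) * real n powr (\<gamma> * real n)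
      \<le> real n ^ (2 * card V) * 4 ^ (card V * n) * real n powr (\<gamma> * real n)"
  proof -
    have "1 \<le> real n ^ (2 * card V)" using assms(2) by simp
    then show ?thesis by (intro mult_right_mono) auto
  qed
  finally show ?thesis unfolding hc \<gamma>_def .
qed


end
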